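(* Let $X$ be a real Banach space, $x \in S(X)$, $\gamma > 0$ and $k \in \mathbb{N}$ be such that $1 - 2k(1-\gamma) > 0$. Then \[ \operatorname{diam}\big(S(B(X^* ), x, 1 - 2k(1-\gamma))\big) \leq 2k \, \operatorname{diam}\big(S(B(X^* ), x, \gamma)\big). \]
   Context: $B(\cdot)$, $S(\cdot)$ denote closed unit ball and unit sphere. For $x \in S(X)$ and real $\alpha$, the w*-slice is $S(B(X^* ), x, \alpha) := \{g \in B(X^* ) : g(x) > \alpha\}$ (the diameter of the empty set is taken as $0$). *)

theory Defs
  imports "HOL-Analysis.Analysis"
begin
(* Dual space X* = bounded linear functionals with operator norm; w*-slice of the dual unit ball. *)

definition wstar_slice :: "'a::real_normed_vector \<Rightarrow> real \<Rightarrow> ('a \<Rightarrow>\<^sub>L real) set" where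
  "wstar_slice x \<alpha> = {g. norm g \<le> 1 \<and> blinfun_apply g x > \<alpha>}"

end

theory Submission
  imports Defs
begin

definition goodG :: "('a::real_normed_vector \<times> real) set \<Rightarrow> bool" where
  "goodG G \<longleftrightarrow> subspace G \<and> (\<forall>p\<in>G. snd p \<le> norm (fst p))"

lemma goodG_sub:
  assumes "goodG G" "(y,r) \<in> G" shows "r \<le> norm y"
  using assms unfolding goodG_def by auto

lemma goodG_add:
  assumes "goodG G" "(y,r) \<in> G" "(y',r') \<in> G" shows "(y+y', r+r') \<in> G"
  using assms unfolding goodG_def subspace_def by (metis add_Pair)

lemma goodG_scale:
  assumes "goodG G" "(y,r) \<in> G" shows "(a *\<^sub>R y, a * r) \<in> G"
  using assms unfolding goodG_def subspace_def by (metis scaleR_Pair scaleR_conv_of_real of_real_def mult.commute real_scaleR_def)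

lemma goodG_zero:
  assumes "goodG G" shows "(0,0) \<in> G"
  using assms unfolding goodG_def subspace_def by (simp add: zero_prod_def)

lemma goodG_chain:
  assumes "C \<noteq> {}" "\<forall>G\<in>C. goodG G" "\<forall>A\<in>C. \<forall>B\<in>C. A \<subseteq> B \<or> B \<subseteq> A"
  shows "goodG (\<Union>C)"
proof -
  obtain G0 where G0: "G0 \<in> C" using assms(1) by blast
  have "0 \<in> \<Union>C" using goodG_zero[of G0] G0 assms(2) by (auto simp: zero_prod_def)
  moreover have "\<forall>p\<in>\<Union>C. \<forall>q\<in>\<Union>C. p + q \<in> \<Union>C"
  proof (intro ballI)
    fix p q assume "p \<in> \<Union>C" "q \<in> \<Union>C"
    then obtain A B where AB: "A \<in> C" "B \<in> C" "p \<in> A" "q \<in> B" by blast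
    show "p + q \<in> \<Union>C"
    proof (cases "A \<subseteq> B")
      case True
      then have "p + q \<in> B" using AB assms(2) unfolding goodG_def subspace_def by blast
      then show ?thesis using AB by blast
    next
      case False
      then have "B \<subseteq> A" using assms(3) AB by blast
      then have "p + q \<in> A" using AB assms(2) unfolding goodG_def subspace_def by blast
      then show ?thesis using AB by blast
    qed
  qed
  moreover have "\<forall>c. \<forall>p\<in>\<Union>C. c *\<^sub>R p \<in> \<Union>C"
    using assms(2) unfolding goodG_def subspace_def by blast
  moreover have "\<forall>p\<in>\<Union>C. snd p \<le> norm (fst p)"
    using assms(2) unfolding goodG_def by blast
  ultimately show ?thesis unfolding goodG_def subspace_def by blast
qed

lemma goodG_extend:
  fixes G :: "('a::real_normed_vector \<times> real) set"
  assumes g: "goodG G" and z: "z \<notin> fst ` G"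
  shows "\<exists>G'. goodG G' \<and> G \<subset> G'"
proof -
  define S where "S = (\<lambda>p. snd p - norm (fst p - z)) ` G"
  define c where "c = Sup S"
  have key: "\<rho> + \<sigma> \<le> norm (u + v)" if "(u,\<rho>) \<in> G" "(v,\<sigma>) \<in> G" for u v \<rho> \<sigma>
    using goodG_sub[OF g goodG_add[OF g that]] .
  have Sne: "S \<noteq> {}" using goodG_zero[OF g] unfolding S_def by blast
  have Sbd: "s \<le> norm (v + z) - \<sigma>" if "s \<in> S" "(v,\<sigma>) \<in> G" for s v \<sigma>
  proof -
    obtain u \<rho> where u: "(u,\<rho>) \<in> G" "s = \<rho> - norm (u - z)" using \<open>s \<in> S\<close> unfolding S_def by auto
    have "norm (u + v) \<le> norm (u - z) + norm (v + z)"
      using norm_triangle_ineq[of "u - z" "v + z"] by simp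
    then show ?thesis using key[OF u(1) that(2)] u(2) by linarith
  qed
  have bdd: "bdd_above S" using Sbd goodG_zero[OF g] unfolding bdd_above_def by blast
  have c1: "\<rho> - norm (u - z) \<le> c" if "(u,\<rho>) \<in> G" for u \<rho>
    unfolding c_def by (rule cSup_upper[OF _ bdd]) (use that in \<open>force simp: S_def\<close>)
  have c2: "c \<le> norm (v + z) - \<sigma>" if "(v,\<sigma>) \<in> G" for v \<sigma>
    unfolding c_def by (rule cSup_least[OF Sne]) (use Sbd that in blast)
  define G' where "G' = {(y + t *\<^sub>R z, r + t * c) | y r t. (y,r) \<in> G}"
  have sub: "G \<subseteq> G'"
  proof
    fix p assume "p \<in> G"
    obtain y r where yr: "p = (y, r)" by (cases p)
    have "p = (y + 0 *\<^sub>R z, r + 0 * c) \<and> (y, r) \<in> G" using yr \<open>p \<in> G\<close> by simp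
    then show "p \<in> G'" unfolding G'_def by (intro CollectI exI)
  qed
  have zin: "(z, c) \<in> G'"
  proof -
    have "(z, c) = (0 + 1 *\<^sub>R z, 0 + 1 * c) \<and> (0, 0) \<in> G" using goodG_zero[OF g] by simp
    then show ?thesis unfolding G'_def by (intro CollectI exI)
  qed
  have znot: "(z, c) \<notin> G" using z by force
  have bound: "r + t * c \<le> norm (y + t *\<^sub>R z)" if yr: "(y,r) \<in> G" for y r t
  proof -
    consider "t = 0" | "t > 0" | "t < 0" by linarith
    then show ?thesis
    proof cases
      case 1 then show ?thesis using goodG_sub[OF g yr] by simp
    next
      case 2
      have m: "((1/t) *\<^sub>R y, (1/t) * r) \<in> G" by (rule goodG_scale[OF g yr])
      have "c \<le> norm ((1/t) *\<^sub>R y + z) - (1/t) * r" using c2[OF m] .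
      also have "(1/t) *\<^sub>R y + z = (1/t) *\<^sub>R (y + t *\<^sub>R z)" using 2 by (simp add: algebra_simps)
      also have "norm \<dots> = (1/t) * norm (y + t *\<^sub>R z)" using 2 by simp
      finally have "c \<le> (norm (y + t *\<^sub>R z) - r) / t" by (simp add: diff_divide_distrib)
      then have "t * c \<le> norm (y + t *\<^sub>R z) - r" using 2 by (simp add: pos_le_divide_eq mult.commute)
      then show ?thesis by linarith
    next
      case 3
      define s where "s = - t"
      have s: "s > 0" using 3 s_def by simp
      have m: "((1/s) *\<^sub>R y, (1/s) * r) \<in> G" by (rule goodG_scale[OF g yr])
      have "(1/s) * r - norm ((1/s) *\<^sub>R y - z) \<le> c" using c1[OF m] .
      also have "(1/s) *\<^sub>R y - z = (1/s) *\<^sub>R (y + t *\<^sub>R z)" using s s_def by (simp add: algebra_simps)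
      also have "norm \<dots> = (1/s) * norm (y + t *\<^sub>R z)" using s by simp
      finally have "(r - norm (y + t *\<^sub>R z)) / s \<le> c" by (simp add: diff_divide_distrib)
      then have "r - norm (y + t *\<^sub>R z) \<le> s * c" using s by (simp add: pos_divide_le_eq mult.commute)
      then show ?thesis using s_def by simp
    qed
  qed
  have "goodG G'"
    unfolding goodG_def subspace_def
  proof (intro conjI ballI allI)
    show "0 \<in> G'" using sub goodG_zero[OF g] by (auto simp: zero_prod_def)
  next
    fix p q assume "p \<in> G'" "q \<in> G'"
    then obtain y r t y' r' t' where p: "p = (y + t *\<^sub>R z, r + t * c)" "(y,r) \<in> G"
      and q: "q = (y' + t' *\<^sub>R z, r' + t' * c)" "(y',r') \<in> G" unfolding G'_def by blast
    have "p + q = ((y + y') + (t + t') *\<^sub>R z, (r + r') + (t + t') * c)"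
      using p q by (simp add: algebra_simps)
    then show "p + q \<in> G'" unfolding G'_def using goodG_add[OF g p(2) q(2)] by blast
  next
    fix a :: real and p assume "p \<in> G'"
    then obtain y r t where p: "p = (y + t *\<^sub>R z, r + t * c)" "(y,r) \<in> G" unfolding G'_def by blast
    have "a *\<^sub>R p = (a *\<^sub>R y + (a * t) *\<^sub>R z, a * r + (a * t) * c)"
      using p by (simp add: algebra_simps)
    then show "a *\<^sub>R p \<in> G'" unfolding G'_def using goodG_scale[OF g p(2)] by blast
  next
    fix p assume "p \<in> G'"
    then obtain y r t where p: "p = (y + t *\<^sub>R z, r + t * c)" "(y,r) \<in> G" unfolding G'_def by blast
    then show "snd p \<le> norm (fst p)" using bound[OF p(2)] by simp
  qed
  then show ?thesis using sub zin znot by blast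
qed

lemma norming_functional:
  fixes x :: "'a::real_normed_vector"
  shows "\<exists>W :: 'a \<Rightarrow>\<^sub>L real. norm W \<le> 1 \<and> blinfun_apply W x = norm x"
proof -
  define G0 where "G0 = {(t *\<^sub>R x, t * norm x) | t. True}"
  have g0: "goodG G0"
    unfolding goodG_def subspace_def G0_def
  proof (intro conjI ballI allI)
    show "0 \<in> {(t *\<^sub>R x, t * norm x) |t. True}" by (auto simp: zero_prod_def intro!: exI[of _ 0])
  next
    fix p q assume "p \<in> {(t *\<^sub>R x, t * norm x) |t. True}" "q \<in> {(t *\<^sub>R x, t * norm x) |t. True}"
    then obtain s t where "p = (s *\<^sub>R x, s * norm x)" "q = (t *\<^sub>R x, t * norm x)" by blast
    then have "p + q = ((s+t) *\<^sub>R x, (s+t) * norm x)" by (simp add: algebra_simps)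
    then show "p + q \<in> {(t *\<^sub>R x, t * norm x) |t. True}" by blast
  next
    fix a :: real and p assume "p \<in> {(t *\<^sub>R x, t * norm x) |t. True}"
    then obtain s where "p = (s *\<^sub>R x, s * norm x)" by blast
    then have "a *\<^sub>R p = ((a * s) *\<^sub>R x, (a * s) * norm x)" by simp
    then show "a *\<^sub>R p \<in> {(t *\<^sub>R x, t * norm x) |t. True}" by blast
  next
    fix p assume "p \<in> {(t *\<^sub>R x, t * norm x) |t. True}"
    then obtain s where "p = (s *\<^sub>R x, s * norm x)" by blast
    then show "snd p \<le> norm (fst p)" by (simp add: mult_right_mono)
  qed
  define A where "A = {G. goodG G \<and> G0 \<subseteq> G}"
  have "\<exists>M\<in>A. \<forall>X\<in>A. M \<subseteq> X \<longrightarrow> X = M"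
  proof (rule subset_Zorn_nonempty)
    show "A \<noteq> {}" using g0 unfolding A_def by blast
  next
    fix C assume C: "C \<noteq> {}" "subset.chain A C"
    have CA: "C \<subseteq> A" and cmp: "\<forall>X\<in>C. \<forall>Y\<in>C. X \<subseteq> Y \<or> Y \<subseteq> X"
      using C(2) unfolding subset_chain_def by blast+
    have gC: "\<forall>G\<in>C. goodG G" using CA unfolding A_def by blast
    have "goodG (\<Union>C)" by (rule goodG_chain[OF C(1) gC cmp])
    moreover have "G0 \<subseteq> \<Union>C" using CA C(1) unfolding A_def by blast
    ultimately show "\<Union>C \<in> A" unfolding A_def by blast
  qed
  then obtain M where MA: "M \<in> A" and maxA: "\<forall>X\<in>A. M \<subseteq> X \<longrightarrow> X = M" by blast
  have M: "goodG M" "G0 \<subseteq> M" using MA unfolding A_def by auto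
  have max: "X = M" if "goodG X" "G0 \<subseteq> X" "M \<subseteq> X" for X
  proof -
    have "X \<in> A" using that unfolding A_def by blast
    then show ?thesis using maxA that(3) by blast
  qed
  have dom: "\<exists>r. (y,r) \<in> M" for y
  proof (rule ccontr)
    assume "\<nexists>r. (y, r) \<in> M"
    then have "y \<notin> fst ` M" by force
    then obtain G' where "goodG G'" "M \<subset> G'" using goodG_extend[OF M(1)] by blast
    then show False using max[of G'] M(2) by blast
  qed
  have uniq: "r = s" if "(y,r) \<in> M" "(y,s) \<in> M" for y r s
  proof -
    have "(0, r - s) \<in> M" using goodG_add[OF M(1) that(1) goodG_scale[OF M(1) that(2), of "-1"]] by simp
    moreover have "(0, s - r) \<in> M" using goodG_add[OF M(1) that(2) goodG_scale[OF M(1) that(1), of "-1"]] by simp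
    ultimately have "r - s \<le> norm (0::'a)" "s - r \<le> norm (0::'a)"
      using goodG_sub[OF M(1)] by blast+
    then show ?thesis by simp
  qed
  define w where "w y = (SOME r. (y,r) \<in> M)" for y
  have win: "(y, w y) \<in> M" for y unfolding w_def by (rule someI_ex[OF dom])
  have wadd: "w (a + b) = w a + w b" for a b
    using uniq[OF win goodG_add[OF M(1) win win]] .
  have wscale: "w (c *\<^sub>R a) = c * w a" for c a
    using uniq[OF win goodG_scale[OF M(1) win]] .
  have wle: "\<bar>w y\<bar> \<le> norm y" for y
  proof -
    have "w y \<le> norm y" using goodG_sub[OF M(1) win] .
    moreover have "w (-y) \<le> norm (-y)" using goodG_sub[OF M(1) win] .
    moreover have "w (-y) = - w y" using wscale[of "-1" y] by simp
    ultimately show ?thesis by simp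
  qed
  have bl: "bounded_linear w"
    by (rule bounded_linear_intro[where K=1]) (use wadd wscale wle in auto)
  have wx: "w x = norm x"
  proof -
    have "(x, norm x) = (1 *\<^sub>R x, 1 * norm x)" by simp
    then have "(x, norm x) \<in> G0" unfolding G0_def by blast
    then have "(x, norm x) \<in> M" using M(2) by blast
    then show ?thesis using uniq[OF win] by blast
  qed
  show ?thesis
  proof (intro exI conjI)
    show "norm (Blinfun w) \<le> 1"
      by (rule norm_blinfun_bound) (use wle bounded_linear_Blinfun_apply[OF bl] in auto)
    show "blinfun_apply (Blinfun w) x = norm x" using wx bounded_linear_Blinfun_apply[OF bl] by simp
  qed
qed

theorem mainTheorem5:
  fixes x :: "'a::banach" and \<gamma> :: real and k :: nat
  assumes "norm x = 1" and "\<gamma> > 0" and "1 - 2 * real k * (1 - \<gamma>) > 0"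
  shows "diameter (wstar_slice x (1 - 2 * real k * (1 - \<gamma>)))
           \<le> 2 * real k * diameter (wstar_slice x \<gamma>)"
proof -
  define K where "K = 2 * real k"
  define \<beta> where "\<beta> = 1 - K * (1 - \<gamma>)"
  define d where "d = diameter (wstar_slice x \<gamma>)"
  have bdd: "bounded (wstar_slice x \<gamma>)"
    by (rule bounded_subset[OF bounded_cball[of 0 1]]) (auto simp: wstar_slice_def)
  have d0: "0 \<le> d" unfolding d_def by (rule diameter_ge_0[OF bdd])
  obtain W :: "'a \<Rightarrow>\<^sub>L real" where W: "norm W \<le> 1" "blinfun_apply W x = 1"
    using norming_functional[of x] assms(1) by auto
  have le1: "blinfun_apply g x \<le> 1" if "norm g \<le> 1" for g :: "'a \<Rightarrow>\<^sub>L real"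
  proof -
    have "norm (blinfun_apply g x) \<le> norm g * norm x" by (rule norm_blinfun)
    then show ?thesis using that assms(1) by simp
  qed
  have "diameter (wstar_slice x \<beta>) \<le> K * d"
  proof (rule diameter_le)
    show "wstar_slice x \<beta> \<noteq> {} \<or> 0 \<le> K * d" using d0 K_def by simp
  next
    fix f g assume f: "f \<in> wstar_slice x \<beta>" and g: "g \<in> wstar_slice x \<beta>"
    have fx: "blinfun_apply f x > \<beta>" "norm f \<le> 1" and gx: "blinfun_apply g x > \<beta>" "norm g \<le> 1"
      using f g unfolding wstar_slice_def by auto
    show "norm (f - g) \<le> K * d"
    proof (cases "k = 0")
      case True
      then have "\<beta> = 1" unfolding \<beta>_def K_def by simp
      then show ?thesis using fx le1[OF fx(2)] by simp
    next
      case False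
      then have K1: "K \<ge> 2" unfolding K_def by simp
      define u where "u = (1/K) *\<^sub>R (f + (K - 1) *\<^sub>R W)"
      define v where "v = (1/K) *\<^sub>R (g + (K - 1) *\<^sub>R W)"
      have inS: "(1/K) *\<^sub>R (h + (K - 1) *\<^sub>R W) \<in> wstar_slice x \<gamma>"
        if h: "blinfun_apply h x > \<beta>" "norm h \<le> 1" for h
      proof -
        have "norm (h + (K - 1) *\<^sub>R W) \<le> norm h + norm ((K - 1) *\<^sub>R W)" by (rule norm_triangle_ineq)
        also have "norm ((K - 1) *\<^sub>R W) = (K - 1) * norm W" using K1 by simp
        also have "\<dots> \<le> (K - 1) * 1" using K1 W(1) by (intro mult_left_mono) auto
        finally have "norm (h + (K - 1) *\<^sub>R W) \<le> K" using h(2) by simp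
        moreover have "norm ((1/K) *\<^sub>R (h + (K - 1) *\<^sub>R W)) = norm (h + (K - 1) *\<^sub>R W) / K"
          using K1 by (simp only: norm_scaleR) simp
        ultimately have n: "norm ((1/K) *\<^sub>R (h + (K - 1) *\<^sub>R W)) \<le> 1" using K1 by (simp only: divide_le_eq_1) (use K1 in auto)
        have "blinfun_apply ((1/K) *\<^sub>R (h + (K - 1) *\<^sub>R W)) x = (blinfun_apply h x + (K - 1)) / K"
          using W(2) by (simp add: blinfun.scaleR_left blinfun.add_left)
        also have "\<dots> > (\<beta> + (K - 1)) / K" using h(1) K1 by (simp add: divide_strict_right_mono)
        also have "(\<beta> + (K - 1)) / K = \<gamma>" using K1 unfolding \<beta>_def by (simp add: field_simps)
        finally show ?thesis using n unfolding wstar_slice_def by auto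
      qed
      have uv: "dist u v \<le> d" unfolding d_def u_def v_def
        by (rule diameter_bounded_bound[OF bdd inS[OF fx] inS[OF gx]])
      have "u - v = (1/K) *\<^sub>R (f - g)" unfolding u_def v_def by (simp add: algebra_simps)
      then have "dist u v = norm (f - g) / K" using K1 by (simp add: dist_norm)
      then show ?thesis using uv K1 by (simp add: divide_le_eq mult.commute)
    qed
  qed
  then show ?thesis unfolding K_def \<beta>_def d_def .
qed

end
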